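(* For every traditional polynomial scheme, there exists a constant $K>0$ and an FTP code such that the communication rate of the FTP code is higher than that of the traditional polynomial scheme, whenever the matrix dimensions $a$, $b$, and $c$ are such that $b \left( \frac{1}{a}+\frac{1}{c} \right) < K$.
   Context: Setting (secure distributed matrix multiplication): a user has matrices $A \in \mathbb{F}_q^{a \times b}$ and $B \in \mathbb{F}_q^{b \times c}$ and wishes to compute $AB$ with the help of $N$ honest-but-curious servers, such that no set of $T$ colluding servers learns any information about $A$ or $B$ ($T$-security). The matrices are partitioned by the inner product partitioning $A = \begin{bmatrix}A_1 & \cdots & A_L\end{bmatrix}$, $B^{\intercal} = \begin{bmatrix}B_1^{\intercal} & \cdots & B_L^{\intercal}\end{bmatrix}$ so that $AB = A_1B_1+\cdots+A_LB_L$ ($L$ is the partitioning parameter). A traditional polynomial scheme uses a polynomial $h(x)=f(x)g(x)$ whose coefficients encode the products $A_kB_\ell$; the user uploads evaluations $f(\alpha_i), g(\alpha_i)$ to Server $i$, each server computes $h(\alpha_i)$ and sends this full evaluation back, with the construction being $T$-secure and allowing the user to reconstruct $AB$ from all $N$ evaluations; its recovery threshold (number of servers) $N'$ satisfies $N'>L$. An FTP (field trace polynomial) code with partitioning parameter $L$ and security parameter $T$ works over $\mathbb{F}_q$ with $q=q_0^{p_1p_2\cdots p_L}$ for a prime power $q_0$ and primes $p_1<\cdots<p_L$; with $N_i = p_i + 2L + 2T - 2$ it uses $N_L$ servers, and instead of full evaluations the servers send field traces of (scaled) evaluations of $h$ to subfields; it is $T$-secure, decodable, and has total communication rate $\left(\frac{N_Lb}{L}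 \left( \frac{1}{a}+\frac{1}{c} \right)+\sum_{i=1}^L\frac{N_i}{p_i}\right)^{-1}$. The total communication rate of a scheme is the number of symbols of $AB$ divided by the total (upload plus download) communication cost. *)

theory Defs
  imports Complex_Main "HOL-Computational_Algebra.Primes"
begin

text \<open>A traditional polynomial scheme with partitioning parameter L, security
parameter T and recovery threshold N' (number of servers).  Only these parameters
matter for its communication cost: each of the N' servers receives
f(alpha_i) (an a x (b/L) matrix) and g(alpha_i) (a (b/L) x c matrix) and returns
h(alpha_i) (an a x c matrix).\<close>
definition trad_scheme :: "nat \<Rightarrow> nat \<Rightarrow> nat \<Rightarrow> bool" where
  "trad_scheme L T N' \<longleftrightarrow> L \<ge> 1 \<and> N' > L"

text \<open>Total communication rate: symbols of AB divided by upload plus download cost.\<close>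
definition trad_rate :: "nat \<Rightarrow> nat \<Rightarrow> nat \<Rightarrow> nat \<Rightarrow> nat \<Rightarrow> real" where
  "trad_rate L N' a b c =
     (real a * real c) /
     (real N' * (real a * real b / real L + real b * real c / real L)
      + real N' * (real a * real c))"

definition prime_power :: "nat \<Rightarrow> bool" where
  "prime_power q \<longleftrightarrow> (\<exists>r k. prime r \<and> k \<ge> 1 \<and> q = r ^ k)"

text \<open>FTP code with partitioning parameter L, security parameter T, base field size q0
(the code works over the field of size q0^(p_1 ... p_L)) and primes p_1 < ... < p_L
(given as p 1, ..., p L).\<close>
definition FTP_code :: "nat \<Rightarrow> nat \<Rightarrow> nat \<Rightarrow> (nat \<Rightarrow> nat) \<Rightarrow> bool" where
  "FTP_code L T q0 p \<longleftrightarrow> L \<ge> 1 \<and> prime_power q0 \<and>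
     (\<forall>i\<in>{1..L}. prime (p i)) \<and> strict_mono_on {1..L} p"

definition FTP_N :: "nat \<Rightarrow> nat \<Rightarrow> (nat \<Rightarrow> nat) \<Rightarrow> nat \<Rightarrow> nat" where
  "FTP_N L T p i = p i + 2 * L + 2 * T - 2"

definition FTP_rate :: "nat \<Rightarrow> nat \<Rightarrow> (nat \<Rightarrow> nat) \<Rightarrow> nat \<Rightarrow> nat \<Rightarrow> nat \<Rightarrow> real" where
  "FTP_rate L T p a b c =
     1 / (real (FTP_N L T p L) * real b / real L * (1 / real a + 1 / real c)
          + (\<Sum>i=1..L. real (FTP_N L T p i) / real (p i)))"

end

theory Submission
  imports Defs
begin

primrec pseq :: "nat \<Rightarrow> nat \<Rightarrow> nat" where
  "pseq M 0 = M"
| "pseq M (Suc n) = (SOME q. prime q \<and> pseq M n < q)"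

lemma pseq_Suc: "prime (pseq M (Suc n)) \<and> pseq M n < pseq M (Suc n)"
  using someI_ex[OF bigger_prime[of "pseq M n"]] by simp

lemma pseq_mono: "strict_mono (pseq M)"
  unfolding strict_mono_Suc_iff using pseq_Suc by blast

lemma pseq_gt: "i \<ge> 1 \<Longrightarrow> pseq M i > M"
proof -
  assume "i \<ge> 1"
  then have "pseq M 0 < pseq M i" using pseq_mono[of M] strict_mono_less[of "pseq M" 0 i] by simp
  then show ?thesis by (simp del: pseq.simps(2))
qed

lemma pseq_prime: "i \<ge> 1 \<Longrightarrow> prime (pseq M i)"
  using pseq_Suc by (cases i) (auto simp del: pseq.simps(2))

lemma rate_eq:
  assumes "a > 0" "c > 0" "L > 0"
  shows "trad_rate L N' a b c = 1 / (real N' * (real b * (1 / real a + 1 / real c)) / real L + real N')"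
  using assms unfolding trad_rate_def by (simp add: field_simps)

theorem theorem2:
  fixes L T N' :: nat
  assumes "trad_scheme L T N'"
  shows "\<exists>K::real. K > 0 \<and> (\<exists>q0 p. FTP_code L T q0 p \<and>
           (\<forall>a b c :: nat. a > 0 \<longrightarrow> b > 0 \<longrightarrow> c > 0 \<longrightarrow>
              real b * (1 / real a + 1 / real c) < K \<longrightarrow>
              FTP_rate L T p a b c > trad_rate L N' a b c))"
proof -
  have L1: "L \<ge> 1" and NL: "N' \<ge> L + 1" using assms by (auto simp: trad_scheme_def)
  define D where "D = 2 * L + 2 * T - 2"
  define M where "M = L * D"
  define p where "p = pseq M"
  have FN: "real (FTP_N L T p i) = real (p i) + real D" for i
    unfolding FTP_N_def D_def using L1 by (simp add: of_nat_diff)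
  have ppos: "real (p i) > real M" if "i \<ge> 1" for i
    using pseq_gt[OF that] p_def by simp
  define S where "S = (\<Sum>i=1..L. real (FTP_N L T p i) / real (p i))"
  have term_le: "real (FTP_N L T p i) / real (p i) \<le> 1 + real D / (real M + 1)" if "i \<in> {1..L}" for i
  proof -
    have i1: "i \<ge> 1" using that by simp
    have pg: "real (p i) \<ge> real M + 1" using pseq_gt[OF i1, of M] p_def by simp
    have pp: "real (p i) > 0" using pg by linarith
    have "real (FTP_N L T p i) / real (p i) = 1 + real D / real (p i)"
      using pp FN by (simp add: field_simps)
    also have "real D / real (p i) \<le> real D / (real M + 1)"
      using pg by (intro divide_left_mono) auto
    finally show ?thesis by simp
  qed
  have Sle: "S \<le> real L * (1 + real D / (real M + 1))"
    unfolding S_def using sum_mono[OF term_le, of "{1..L}"] by simp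
  have "real L * (real D / (real M + 1)) < 1"
  proof -
    have "real L * real D < real M + 1" unfolding M_def by simp
    then show ?thesis by (simp add: field_simps)
  qed
  then have SN: "S < real N'" using Sle NL
    by (simp only: distrib_left mult_1_right)
  have Spos: "S > 0"
  proof -
    have "real (FTP_N L T p i) / real (p i) > 0" if "i \<in> {1..L}" for i
      using ppos[of i] that FN by (auto intro!: divide_pos_pos)
    then show ?thesis unfolding S_def using L1 by (intro sum_pos) auto
  qed
  define NLr where "NLr = real (FTP_N L T p L)"
  have NLr0: "NLr \<ge> 0" unfolding NLr_def by simp
  define K where "K = (real N' - S) * real L / (NLr + real N')"
  have Npos: "real N' > 0" using NL by simp
  have Kpos: "K > 0" unfolding K_def using SN L1 NLr0 Npos by (intro divide_pos_pos mult_pos_pos) auto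
  have code: "FTP_code L T 2 p"
    unfolding FTP_code_def prime_power_def p_def
  proof (intro conjI)
    show "\<exists>r k. prime r \<and> k \<ge> 1 \<and> (2::nat) = r ^ k" by (rule exI[of _ 2], rule exI[of _ 1]) simp
    show "\<forall>i\<in>{1..L}. prime (pseq M i)" using pseq_prime by auto
    show "strict_mono_on {1..L} (pseq M)" using pseq_mono[of M]
      by (simp add: strict_mono_on_def strict_mono_def)
  qed (use L1 in auto)
  show ?thesis
  proof (intro exI conjI allI impI)
    show "K > 0" by (rule Kpos)
    show "FTP_code L T 2 p" by (rule code)
    fix a b c :: nat
    assume a: "a > 0" and b: "b > 0" and c: "c > 0"
    define x where "x = real b * (1 / real a + 1 / real c)"
    assume "real b * (1 / real a + 1 / real c) < K"
    then have xK: "x < K" by (simp add: x_def)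
    have x0: "x \<ge> 0" unfolding x_def by simp
    have "(NLr + real N') * x < (NLr + real N') * K"
      using xK NLr0 Npos by (intro mult_strict_left_mono) auto
    also have "\<dots> = (real N' - S) * real L" unfolding K_def using NLr0 Npos by simp
    finally have h1: "(NLr + real N') * x < (real N' - S) * real L" .
    have h2: "NLr * x < (real N' - S) * real L"
      using h1 x0 Npos by (smt (verit) mult_nonneg_nonneg distrib_right)
    have A: "NLr * x / real L + S < real N' * x / real L + real N'"
    proof -
      have "NLr * x / real L < real N' - S" using h2 L1 by (simp add: field_simps)
      moreover have "real N' * x / real L \<ge> 0" using x0 by simp
      ultimately show ?thesis by linarith
    qed
    have Apos: "NLr * x / real L + S > 0" using Spos NLr0 x0
      by (smt (verit) divide_nonneg_nonneg mult_nonneg_nonneg of_nat_0_le_iff)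
    have F: "FTP_rate L T p a b c = 1 / (NLr * x / real L + S)"
      unfolding FTP_rate_def NLr_def x_def S_def by (simp add: field_simps)
    have T: "trad_rate L N' a b c = 1 / (real N' * x / real L + real N')"
      unfolding x_def using rate_eq a c L1 by simp
    show "FTP_rate L T p a b c > trad_rate L N' a b c"
      unfolding F T using A Apos by (simp add: frac_less2)
  qed
qed

end
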